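(* Let $A$ be a $2\times n$ array with pairwise distinct entries and let $k\ge 1$. The DAG $D^k_A$ has at most $6kn$ nodes.
   Context: For a $2\times n$ array $A$ with distinct entries from a total order and $1\le a\le b\le n$, let Top-$k([a,b])$ denote the set of positions of the $k$ largest values in $A[1..2][a..b]$ (rows 1 and 2, columns $a..b$). The DAG $D^k_A$ has nodes labelled by intervals $[a,b]$, $1\le a\le b\le n$, with nodes identified by their labels, defined inductively: the root is $[1,n]$; a node $[a,b]$ is a leaf (has no children) if $2(b-a+1)\le k$; otherwise, letting $a'$ and $b'$ ($a\le a'\le b'\le b$) be the smallest and largest column indices among the positions in Top-$k([a,b])$, the node $[a,b]$ has left child $[a,b'-1]$ if $a<b'$ and right child $[a'+1,b]$ if $a'<b$. The nodes of $D^k_A$ are exactly those reachable from the root. *)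

theory Defs
  imports Main
begin

text \<open>A 2 x n array is a function A :: nat \<Rightarrow> nat \<Rightarrow> 'a, A i j = entry in row i, column j,
  used for rows 1,2 and columns 1..n. Intervals [a,b] are pairs (a,b).\<close>

definition positions :: "nat \<Rightarrow> nat \<Rightarrow> (nat \<times> nat) set" where
  "positions a b = {1,2} \<times> {a..b}"

definition topk :: "(nat \<Rightarrow> nat \<Rightarrow> 'a::linorder) \<Rightarrow> nat \<Rightarrow> nat \<Rightarrow> nat \<Rightarrow> (nat \<times> nat) set" where
  "topk A k a b = {p \<in> positions a b.
      card {q \<in> positions a b. A (fst q) (snd q) > A (fst p) (snd p)} < k}"

definition children :: "(nat \<Rightarrow> nat \<Rightarrow> 'a::linorder) \<Rightarrow> nat \<Rightarrow> nat \<times> nat \<Rightarrow> (nat \<times> nat) set" where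
  "children A k ab = (case ab of (a, b) \<Rightarrow>
     (if 2 * (b - a + 1) \<le> k then {}
      else (let a' = Min (snd ` topk A k a b); b' = Max (snd ` topk A k a b) in
            (if a < b' then {(a, b' - 1)} else {}) \<union> (if a' < b then {(a' + 1, b)} else {}))))"

inductive_set dag_nodes :: "(nat \<Rightarrow> nat \<Rightarrow> 'a::linorder) \<Rightarrow> nat \<Rightarrow> nat \<Rightarrow> (nat \<times> nat) set"
  for A k n where
  root: "(1, n) \<in> dag_nodes A k n"
| child: "ab \<in> dag_nodes A k n \<Longrightarrow> c \<in> children A k ab \<Longrightarrow> c \<in> dag_nodes A k n"

end

theory Submission
  imports Defs
begin

definition cntv :: "(nat \<Rightarrow> nat \<Rightarrow> 'a::linorder) \<Rightarrow> nat \<Rightarrow> nat \<Rightarrow> 'a \<Rightarrow> nat" where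
  "cntv A a b x = card {q \<in> positions a b. x < A (fst q) (snd q)}"

definition colmax :: "(nat \<Rightarrow> nat \<Rightarrow> 'a::linorder) \<Rightarrow> nat \<Rightarrow> 'a" where
  "colmax A c = max (A 1 c) (A 2 c)"

lemma finite_positions[simp]: "finite (positions a b)"
  by (simp add: positions_def)

lemma topk_alt: "topk A k a b = {p \<in> positions a b. cntv A a b (A (fst p) (snd p)) < k}"
  by (simp add: topk_def cntv_def)

lemma topk_sub: "topk A k a b \<subseteq> positions a b"
  by (auto simp: topk_def)

lemma topk_ne:
  assumes "a \<le> b" "k \<ge> 1"
  shows "topk A k a b \<noteq> {}"
proof -
  let ?P = "positions a b"
  have ne: "?P \<noteq> {}" using assms by (auto simp: positions_def)
  define m where "m = Max ((\<lambda>q. A (fst q) (snd q)) ` ?P)"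
  have "m \<in> (\<lambda>q. A (fst q) (snd q)) ` ?P" unfolding m_def using ne by (intro Max_in) auto
  then obtain p where p: "p \<in> ?P" "m = A (fst p) (snd p)" by auto
  have "{q \<in> ?P. A (fst p) (snd p) < A (fst q) (snd q)} = {}"
  proof -
    have "\<And>q. q \<in> ?P \<Longrightarrow> A (fst q) (snd q) \<le> m" unfolding m_def by (intro Max_ge) auto
    then show ?thesis using p by fastforce
  qed
  then have C: "card {q \<in> ?P. A (fst p) (snd p) < A (fst q) (snd q)} = 0" by (simp only: card.empty)
  have "p \<in> topk A k a b"
    unfolding topk_def
  proof (intro CollectI conjI)
    show "p \<in> ?P" using p by simp
    show "card {q \<in> ?P. A (fst p) (snd p) < A (fst q) (snd q)} < k" using C assms(2) by linarith
  qed
  then show ?thesis by auto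
qed

lemma topk_mono:
  assumes "p \<in> topk A k c d" "p \<in> positions a b" "c \<le> a" "b \<le> d"
  shows "p \<in> topk A k a b"
proof -
  have sub: "positions a b \<subseteq> positions c d" using assms(3,4) by (auto simp: positions_def)
  have "card {q \<in> positions a b. A (fst p) (snd p) < A (fst q) (snd q)}
      \<le> card {q \<in> positions c d. A (fst p) (snd p) < A (fst q) (snd q)}"
    by (rule card_mono) (use sub in auto)
  then show ?thesis using assms(1,2) by (auto simp: topk_def)
qed

lemma topk_cnt:
  assumes "(i, c) \<in> topk A k lo hi"
  shows "cntv A lo hi (colmax A c) < k"
proof -
  have i: "i \<in> {1,2}" using assms by (auto simp: topk_def positions_def)
  have le: "A i c \<le> colmax A c" using i by (auto simp: colmax_def)
  have "cntv A lo hi (colmax A c) \<le> cntv A lo hi (A i c)"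
    unfolding cntv_def by (rule card_mono) (use le in auto)
  also have "\<dots> < k" using assms by (simp add: topk_alt)
  finally show ?thesis .
qed

lemma inv:
  assumes "ab \<in> dag_nodes A k n" "k \<ge> 1" "n \<ge> 1"
  shows "case ab of (a, b) \<Rightarrow> 1 \<le> a \<and> a \<le> b \<and> b \<le> n
     \<and> (b = n \<or> (\<exists>i. (i, b+1) \<in> topk A k a (b+1)))
     \<and> (a = 1 \<or> (\<exists>i. (i, a-1) \<in> topk A k (a-1) b))"
  using assms(1)
proof induct
  case root
  then show ?case using assms by simp
next
  case (child ab c)
  obtain a b where ab: "ab = (a, b)" by force
  with child.hyps(2) have IH: "1 \<le> a" "a \<le> b" "b \<le> n"
     "b = n \<or> (\<exists>i. (i, b+1) \<in> topk A k a (b+1))"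
     "a = 1 \<or> (\<exists>i. (i, a-1) \<in> topk A k (a-1) b)" by auto
  define T where "T = topk A k a b"
  define a' where "a' = Min (snd ` T)"
  define b' where "b' = Max (snd ` T)"
  have nl: "\<not> 2 * (b - a + 1) \<le> k" and
    c: "c \<in> (if a < b' then {(a, b' - 1)} else {}) \<union> (if a' < b then {(a' + 1, b)} else {})"
    using child.hyps(3) unfolding ab children_def T_def a'_def b'_def Let_def
    by (auto split: if_splits)
  have Tne: "T \<noteq> {}" using topk_ne[OF IH(2) assms(2)] T_def by simp
  have Tsub: "T \<subseteq> positions a b" using topk_sub T_def by simp
  have fin: "finite (snd ` T)" using Tsub finite_positions finite_subset by blast
  have "b' \<in> snd ` T" unfolding b'_def using fin Tne by (intro Max_in) auto
  then obtain p where p: "p \<in> T" "snd p = b'" by auto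
  have "a' \<in> snd ` T" unfolding a'_def using fin Tne by (intro Min_in) auto
  then obtain p' where p': "p' \<in> T" "snd p' = a'" by auto
  have pp: "fst p \<in> {1,2}" "a \<le> b'" "b' \<le> b" using p Tsub by (auto simp: positions_def)
  have pp': "fst p' \<in> {1,2}" "a \<le> a'" "a' \<le> b" using p' Tsub by (auto simp: positions_def)
  from c show ?case
  proof (elim UnE)
    assume "c \<in> (if a < b' then {(a, b' - 1)} else {})"
    then have c1: "c = (a, b' - 1)" "a < b'" by (auto split: if_splits)
    have P: "(fst p, b' - 1 + 1) \<in> topk A k a (b' - 1 + 1)"
    proof -
      have e: "(fst p, b' - 1 + 1) = p" using p c1 by (cases p) auto
      show ?thesis unfolding e
        by (rule topk_mono[of _ A k a b]) (use p pp c1 T_def in \<open>auto simp: positions_def mem_Times_iff\<close>)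
    qed
    have Q: "a = 1 \<or> (\<exists>i. (i, a-1) \<in> topk A k (a-1) (b' - 1))"
    proof (cases "a = 1")
      case False
      then obtain i where i: "(i, a-1) \<in> topk A k (a-1) b" using IH(5) by auto
      have "i \<in> {1,2}" using i by (auto simp: topk_def positions_def)
      then have "(i, a-1) \<in> topk A k (a-1) (b' - 1)"
        using c1 pp by (intro topk_mono[OF i]) (auto simp: positions_def)
      then show ?thesis by auto
    qed simp
    show ?thesis using c1 IH P Q pp by auto
  next
    assume "c \<in> (if a' < b then {(a' + 1, b)} else {})"
    then have c1: "c = (a' + 1, b)" "a' < b" by (auto split: if_splits)
    have Q: "(fst p', a' + 1 - 1) \<in> topk A k (a' + 1 - 1) b"
    proof -
      have e: "(fst p', a' + 1 - 1) = p'" using p' by (cases p') auto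
      show ?thesis unfolding e
        by (rule topk_mono[of _ A k a b]) (use p' pp' c1 T_def in \<open>auto simp: positions_def mem_Times_iff\<close>)
    qed
    have P: "b = n \<or> (\<exists>i. (i, b+1) \<in> topk A k (a'+1) (b+1))"
    proof (cases "b = n")
      case False
      then obtain i where i: "(i, b+1) \<in> topk A k a (b+1)" using IH(4) by auto
      have "i \<in> {1,2}" using i by (auto simp: topk_def positions_def)
      then have "(i, b+1) \<in> topk A k (a'+1) (b+1)"
        using c1 pp' by (intro topk_mono[OF i]) (auto simp: positions_def)
      then show ?thesis by auto
    qed simp
    show ?thesis using c1 IH P Q pp' by auto
  qed
qed

lemma cardB:
  assumes "finite B" "\<forall>b\<in>B. lo \<le> b \<and> cntv A lo b x < k \<and> x < colmax A (b+1)"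
  shows "card B \<le> k"
proof (cases "B = {}")
  case False
  define bm where "bm = Max B"
  have bm: "bm \<in> B" "\<forall>b\<in>B. b \<le> bm" using False assms(1) unfolding bm_def by auto
  define f where "f b = (if x < A 1 (b+1) then (1::nat, b+1) else (2, b+1))" for b
  have "f ` (B - {bm}) \<subseteq> {q \<in> positions lo bm. x < A (fst q) (snd q)}"
  proof
    fix q assume "q \<in> f ` (B - {bm})"
    then obtain b where b: "b \<in> B" "b \<noteq> bm" "q = f b" by auto
    have "b < bm" using b bm by force
    moreover have "lo \<le> b" "x < colmax A (b+1)" using assms(2) b by auto
    ultimately show "q \<in> {q \<in> positions lo bm. x < A (fst q) (snd q)}"
      using b by (auto simp: f_def positions_def colmax_def less_max_iff_disj)
  qed
  moreover have "inj_on f (B - {bm})" by (rule inj_onI) (auto simp: f_def split: if_splits)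
  ultimately have "card (B - {bm}) \<le> cntv A lo bm x"
  proof -
    assume sb: "f ` (B - {bm}) \<subseteq> {q \<in> positions lo bm. x < A (fst q) (snd q)}" and ij: "inj_on f (B - {bm})"
    have "card (B - {bm}) = card (f ` (B - {bm}))" by (rule card_image[symmetric]) (rule ij)
    also have "\<dots> \<le> cntv A lo bm x" unfolding cntv_def by (rule card_mono) (simp, rule sb)
    finally show ?thesis .
  qed
  also have "\<dots> < k" using assms(2) bm by auto
  finally have "card (B - {bm}) < k" .
  then show ?thesis using bm assms(1) by (simp add: card_Diff_singleton)
qed simp

lemma cardC:
  assumes "finite C" "\<forall>a\<in>C. a \<le> hi \<and> cntv A a hi x < k \<and> x < colmax A (a-1)"
  shows "card C \<le> k"
proof (cases "C = {}")
  case False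
  define am where "am = Min C"
  have am: "am \<in> C" "\<forall>a\<in>C. am \<le> a" using False assms(1) unfolding am_def by auto
  define f where "f a = (if x < A 1 (a-1) then (1::nat, a-1) else (2, a-1))" for a
  have "f ` (C - {am}) \<subseteq> {q \<in> positions am hi. x < A (fst q) (snd q)}"
  proof
    fix q assume "q \<in> f ` (C - {am})"
    then obtain a where a: "a \<in> C" "a \<noteq> am" "q = f a" by auto
    have "am < a" using a am by force
    moreover have "a \<le> hi" "x < colmax A (a-1)" using assms(2) a by auto
    ultimately show "q \<in> {q \<in> positions am hi. x < A (fst q) (snd q)}"
      using a by (auto simp: f_def positions_def colmax_def less_max_iff_disj)
  qed
  moreover have "inj_on f (C - {am})"
  proof (rule inj_onI)
    fix u v assume "u \<in> C - {am}" "v \<in> C - {am}" "f u = f v"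
    moreover have "am < u" "am < v" using am \<open>u \<in> C - {am}\<close> \<open>v \<in> C - {am}\<close> by force+
    ultimately show "u = v" by (auto simp: f_def split: if_splits)
  qed
  ultimately have "card (C - {am}) \<le> cntv A am hi x"
  proof -
    assume sb: "f ` (C - {am}) \<subseteq> {q \<in> positions am hi. x < A (fst q) (snd q)}" and ij: "inj_on f (C - {am})"
    have "card (C - {am}) = card (f ` (C - {am}))" by (rule card_image[symmetric]) (rule ij)
    also have "\<dots> \<le> cntv A am hi x" unfolding cntv_def by (rule card_mono) (simp, rule sb)
    finally show ?thesis .
  qed
  also have "\<dots> < k" using assms(2) am by auto
  finally have "card (C - {am}) < k" .
  then show ?thesis using am assms(1) by (simp add: card_Diff_singleton)
qed simp

theorem lemma5:
  fixes A :: "nat \<Rightarrow> nat \<Rightarrow> 'a::linorder" and n k :: nat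
  assumes "n \<ge> 1" and "k \<ge> 1"
    and "inj_on (\<lambda>(i, j). A i j) ({1, 2} \<times> {1..n})"
  shows "finite (dag_nodes A k n) \<and> card (dag_nodes A k n) \<le> 6 * k * n"
proof -
  define B where "B a = {b \<in> {a..<n}. cntv A (a-1) b (colmax A (a-1)) < k
      \<and> colmax A (a-1) < colmax A (b+1)}" for a
  define C where "C b = {a \<in> {2..b}. cntv A a (b+1) (colmax A (b+1)) < k
      \<and> colmax A (b+1) < colmax A (a-1)}" for b
  define S1 where "S1 = {1::nat} \<times> {1..n}"
  define S2 where "S2 = {1..n} \<times> {n}"
  define S3 where "S3 = Sigma {2..n} B"
  define S4 where "S4 = (\<lambda>(b, a). (a, b)) ` Sigma {1..<n} C"
  have cm: "\<exists>i\<in>{1,2}. colmax A c = A i c" for c by (auto simp: colmax_def max_def)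
  have cinj: "colmax A c \<noteq> colmax A d" if "c \<in> {1..n}" "d \<in> {1..n}" "c \<noteq> d" for c d
  proof
    assume e: "colmax A c = colmax A d"
    obtain i where i: "i \<in> {1,2}" "colmax A c = A i c" using cm by blast
    obtain j where j: "j \<in> {1,2}" "colmax A d = A j d" using cm by blast
    have "(\<lambda>(i, j). A i j) (i, c) = (\<lambda>(i, j). A i j) (j, d)" using i j e by simp
    moreover have "(i, c) \<in> {1, 2} \<times> {1..n}" "(j, d) \<in> {1, 2} \<times> {1..n}" using i j that by auto
    ultimately have "(i, c) = (j, d)" using inj_onD[OF assms(3)] by blast
    then show False using that by simp
  qed
  have sub: "dag_nodes A k n \<subseteq> S1 \<union> S2 \<union> S3 \<union> S4"
  proof
    fix ab assume "ab \<in> dag_nodes A k n"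
    note abn = this
    obtain a b where ab: "ab = (a, b)" by (cases ab)
    have IC: "1 \<le> a \<and> a \<le> b \<and> b \<le> n
     \<and> (b = n \<or> (\<exists>i. (i, b+1) \<in> topk A k a (b+1)))
     \<and> (a = 1 \<or> (\<exists>i. (i, a-1) \<in> topk A k (a-1) b))"
      using inv[OF abn assms(2,1)] unfolding ab by simp
    have I: "1 \<le> a" "a \<le> b" "b \<le> n"
     "b = n \<or> (\<exists>i. (i, b+1) \<in> topk A k a (b+1))"
     "a = 1 \<or> (\<exists>i. (i, a-1) \<in> topk A k (a-1) b)"
      using IC by blast+
    show "ab \<in> S1 \<union> S2 \<union> S3 \<union> S4"
    proof (cases "a = 1 \<or> b = n")
      case True then show ?thesis using I ab by (auto simp: S1_def S2_def)
    next
      case False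
      then obtain i j where i: "(i, b+1) \<in> topk A k a (b+1)" and j: "(j, a-1) \<in> topk A k (a-1) b"
        using I by auto
      have P: "cntv A a (b+1) (colmax A (b+1)) < k" using topk_cnt[OF i] .
      have Q: "cntv A (a-1) b (colmax A (a-1)) < k" using topk_cnt[OF j] .
      have ne: "colmax A (a-1) \<noteq> colmax A (b+1)" using False I by (intro cinj) auto
      show ?thesis
      proof (cases "colmax A (a-1) < colmax A (b+1)")
        case True
        then have "b \<in> B a" using I False Q unfolding B_def by simp
        then have "ab \<in> S3" using ab I False unfolding S3_def by simp
        then show ?thesis by blast
      next
        case f2: False
        with ne have "colmax A (b+1) < colmax A (a-1)" by auto
        then have "(b, a) \<in> Sigma {1..<n} C" using ab I False P by (auto simp: C_def)
        then have "ab \<in> S4" unfolding S4_def ab by (rule rev_image_eqI) simp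
        then show ?thesis by blast
      qed
    qed
  qed
  have finB: "finite (B a)" for a by (simp add: B_def)
  have finC: "finite (C b)" for b by (simp add: C_def)
  have cB: "card (B a) \<le> k" for a
    by (rule cardB[OF finB, where lo="a-1" and x="colmax A (a-1)"]) (auto simp: B_def)
  have cC: "card (C b) \<le> k" for b
    by (rule cardC[OF finC, where hi="b+1" and x="colmax A (b+1)"]) (auto simp: C_def)
  have f3: "finite S3" "finite S4" using finB finC by (auto simp: S3_def S4_def)
  have fin: "finite (S1 \<union> S2 \<union> S3 \<union> S4)" using f3 by (simp add: S1_def S2_def)
  have c3: "card S3 \<le> n * k"
  proof -
    have "card S3 = (\<Sum>a\<in>{2..n}. card (B a))" unfolding S3_def using finB by (simp add: card_SigmaI)
    also have "\<dots> \<le> card {2..n} * k" using cB sum_bounded_above[of "{2..n}" "\<lambda>a. card (B a)" k] by simp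
    also have "\<dots> \<le> n * k" by simp
    finally show ?thesis .
  qed
  have c4: "card S4 \<le> n * k"
  proof -
    have "card S4 \<le> card (Sigma {1..<n} C)" unfolding S4_def by (rule card_image_le) (simp add: finC)
    also have "\<dots> = (\<Sum>b\<in>{1..<n}. card (C b))" using finC by (simp add: card_SigmaI)
    also have "\<dots> \<le> card {1..<n} * k" using cC sum_bounded_above[of "{1..<n}" "\<lambda>b. card (C b)" k] by simp
    also have "\<dots> \<le> n * k" by simp
    finally show ?thesis .
  qed
  have u1: "card (S1 \<union> S2 \<union> S3 \<union> S4) \<le> card (S1 \<union> S2 \<union> S3) + card S4" by (rule card_Un_le)
  have u2: "card (S1 \<union> S2 \<union> S3) \<le> card (S1 \<union> S2) + card S3" by (rule card_Un_le)
  have u3: "card (S1 \<union> S2) \<le> card S1 + card S2" by (rule card_Un_le)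
  have c12: "card S1 = n" "card S2 = n" by (simp_all add: S1_def S2_def)
  have nk: "n \<le> n * k" using assms(2) by simp
  have e6: "6 * k * n = 6 * (n * k)" by simp
  have "card (S1 \<union> S2 \<union> S3 \<union> S4) \<le> 6 * k * n"
    using u1 u2 u3 c12 c3 c4 nk e6 by linarith
  moreover have "card (dag_nodes A k n) \<le> card (S1 \<union> S2 \<union> S3 \<union> S4)" by (rule card_mono[OF fin sub])
  ultimately show ?thesis using finite_subset[OF sub fin] by linarith
qed

end
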